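(* Let $G=(V,E)$ be a $k$-uniform cored hypergraph ($k\ge3$) with Laplacian tensor $\mathcal L$. Then $\lambda=1$ is an H-eigenvalue of $\mathcal L$.
   Context: A $k$-uniform hypergraph $G=(V,E)$ has $V=[n]$ and a nonempty set $E$ of $k$-element subsets of $V$; $d_i$ is the number of edges containing $i$. $G$ is cored if every edge contains a vertex of degree one. The Laplacian tensor $\mathcal L=\mathcal D-\mathcal A$ ($\mathcal D$ diagonal with entries $d_i$, $\mathcal A$ with entries $\frac1{(k-1)!}$ at index tuples forming an edge and $0$ otherwise) satisfies $(\mathcal L\mathbf x^{k-1})_i=d_ix_i^{k-1}-\sum_{e\in E,\,i\in e}\prod_{s\in e\setminus\{i\}}x_s$. A real $\lambda$ is an H-eigenvalue if some nonzero $\mathbf x\in\mathbb R^n$ satisfies $(\mathcal L\mathbf x^{k-1})_i=\lambda x_i^{k-1}$ for all $i$. *)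

theory Defs
  imports "HOL-Analysis.Analysis"
begin

definition k_uniform_hypergraph :: "nat \<Rightarrow> nat \<Rightarrow> nat set set \<Rightarrow> bool" where
  "k_uniform_hypergraph n k E \<longleftrightarrow>
     E \<noteq> {} \<and> (\<forall>e\<in>E. e \<subseteq> {1..n} \<and> card e = k)"

definition hdegree :: "nat set set \<Rightarrow> nat \<Rightarrow> nat" where
  "hdegree E i = card {e\<in>E. i \<in> e}"

definition cored :: "nat set set \<Rightarrow> bool" where
  "cored E \<longleftrightarrow> (\<forall>e\<in>E. \<exists>i\<in>e. hdegree E i = 1)"

text \<open>(L x^{k-1})_i = d_i x_i^{k-1} - sum over edges e containing i of the
  product of x_s over s in e - {i}.\<close>
definition laplacian_apply :: "nat set set \<Rightarrow> nat \<Rightarrow> (nat \<Rightarrow> real) \<Rightarrow> nat \<Rightarrow> real" where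
  "laplacian_apply E k x i =
     real (hdegree E i) * x i ^ (k - 1) - (\<Sum>e\<in>{e\<in>E. i \<in> e}. \<Prod>s\<in>e - {i}. x s)"

definition H_eigenvalue :: "nat \<Rightarrow> nat \<Rightarrow> nat set set \<Rightarrow> real \<Rightarrow> bool" where
  "H_eigenvalue n k E lam \<longleftrightarrow>
     (\<exists>x :: nat \<Rightarrow> real. (\<exists>i\<in>{1..n}. x i \<noteq> 0) \<and>
        (\<forall>i\<in>{1..n}. laplacian_apply E k x i = lam * x i ^ (k - 1)))"

end

theory Submission
  imports Defs
begin

lemma prod_zero_aux:
  assumes "finite f" "card f \<ge> 3"
  shows "(\<Prod>s\<in>f - {j}. (if s = i then 1 else 0::real)) = 0"
proof -
  have "card (f - {j}) \<ge> 2" using assms card_Diff_singleton_if[of f j] by auto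
  have "\<not> (f - {j} \<subseteq> {i})"
  proof
    assume "f - {j} \<subseteq> {i}"
    hence "card (f - {j}) \<le> card {i}" by (intro card_mono) auto
    thus False using \<open>card (f - {j}) \<ge> 2\<close> by simp
  qed
  then obtain s where "s \<in> f - {j}" "s \<noteq> i" by auto
  thus ?thesis using assms(1) by (intro prod_zero) auto
qed

theorem proposition5p5:
  fixes n k :: nat and E :: "nat set set"
  assumes "k_uniform_hypergraph n k E"
    and "k \<ge> 3"
    and "cored E"
  shows "H_eigenvalue n k E 1"
proof -
  from assms(1) obtain e where e: "e \<in> E" unfolding k_uniform_hypergraph_def by auto
  from assms(3) e obtain i where i: "i \<in> e" "hdegree E i = 1" unfolding cored_def by auto
  have ein: "e \<subseteq> {1..n}" "card e = k" using assms(1) e unfolding k_uniform_hypergraph_def by auto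
  have iin: "i \<in> {1..n}" using ein i by auto
  define x where "x = (\<lambda>s. if s = i then 1 else 0::real)"
  have fin: "\<And>f. f \<in> E \<Longrightarrow> finite f \<and> card f \<ge> 3"
    using assms(1,2) unfolding k_uniform_hypergraph_def by (metis card.infinite not_numeral_le_zero)
  have sum0: "\<And>j. (\<Sum>f\<in>{f\<in>E. j \<in> f}. \<Prod>s\<in>f - {j}. x s) = 0"
    by (rule sum.neutral) (auto simp: x_def dest!: fin intro: prod_zero_aux)
  show ?thesis unfolding H_eigenvalue_def
  proof (intro exI[of _ x] conjI bexI[of _ i] ballI)
    show "x i \<noteq> 0" by (simp add: x_def)
    show "i \<in> {1..n}" by (rule iin)
    fix j assume "j \<in> {1..n}"
    show "laplacian_apply E k x j = 1 * x j ^ (k - 1)"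
      unfolding laplacian_apply_def sum0 using i(2) assms(2)
      by (cases "j = i") (auto simp: x_def)
  qed
qed

end
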